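(* Let $\mathbf V$, $\mathbf V'$ be right vector spaces over (not necessarily commutative) fields $K$, $K'$, and let $\varphi:\mathcal P(\mathbf V)\dashrightarrow\mathcal P(\mathbf V')$ be a weak linear mapping such that $\operatorname{im}\varphi$ contains a triangle (three non-collinear points). Assume moreover that every field monomorphism $K\to K'$ is surjective. Then $\varphi$ is a linear mapping.
   Context: The projective space on a right vector space $\mathbf V$ over a skew field $K$ has point set $\mathcal P(\mathbf V)$ = set of one-dimensional subspaces, and lines = sets of points contained in a two-dimensional subspace. $\vee$ denotes join (span) of subspaces; for distinct points $X,Y$, $\{X\}\vee\{Y\}$ is the line through them, with conventions $\emptyset\vee\mathcal S=\mathcal S$ and $\{Z\}\vee\{Z\}=\{Z\}$. A partially defined mapping $\varphi:\mathcal P\dashrightarrow\mathcal P'$ has domain $\operatorname{dom}\varphi$, image set $\operatorname{im}\varphi$, exceptional set $\operatorname{ex}\varphi=\mathcal P\setminus\operatorname{dom}\varphi$; for $\mathcal M\subset\mathcal P$, $\mathcal M^\varphi:=\{X^\varphi:X\in\mathcal M\cap\operatorname{dom}\varphi\}$. $\varphi$ is weak linear if $(\{X\}\vee\{Y\})^\varphi\subset\{X\}^\varphi\vee\{Y\}^\varphi$ for all distinct points $X,Y$. $\varphi$ is linear if (L1) $(\{X\}\vee\{Y\})^\varphi=\{X\}^\varphi\vee\{Y\}^\varphi$ for all distinct points $X,Y$, and (L2) whenever $X^\varphi=Y^\varphi$ for distinct $X,Y\in\operatorname{dom}\varphi$, the line $\{X\}\vee\{Y\}$ contains a point of $\operatorname{ex}\varphi$.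 *)

theory Defs
  imports Main
begin

definition right_vs :: "('v::ab_group_add \<Rightarrow> 'k::division_ring \<Rightarrow> 'v) \<Rightarrow> bool" where
  "right_vs sm \<longleftrightarrow>
     (\<forall>v. sm v 1 = v) \<and>
     (\<forall>v a b. sm v (a * b) = sm (sm v a) b) \<and>
     (\<forall>v w a. sm (v + w) a = sm v a + sm w a) \<and>
     (\<forall>v a b. sm v (a + b) = sm v a + sm v b)"

definition subspace_r :: "('v::ab_group_add \<Rightarrow> 'k::division_ring \<Rightarrow> 'v) \<Rightarrow> 'v set \<Rightarrow> bool" where
  "subspace_r sm U \<longleftrightarrow> 0 \<in> U \<and> (\<forall>x\<in>U. \<forall>y\<in>U. x + y \<in> U) \<and> (\<forall>x\<in>U. \<forall>a. sm x a \<in> U)"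

definition span_r :: "('v::ab_group_add \<Rightarrow> 'k::division_ring \<Rightarrow> 'v) \<Rightarrow> 'v set \<Rightarrow> 'v set" where
  "span_r sm A = \<Inter>{U. subspace_r sm U \<and> A \<subseteq> U}"

definition proj_points :: "('v::ab_group_add \<Rightarrow> 'k::division_ring \<Rightarrow> 'v) \<Rightarrow> 'v set set" where
  "proj_points sm = {span_r sm {v} | v. v \<noteq> 0}"

text \<open>Join of two sets of points: all points contained in the subspace spanned by them.
This gives the line through two distinct points, and the conventions
empty-join-S = S and {Z} join {Z} = {Z}.\<close>
definition pjoin :: "('v::ab_group_add \<Rightarrow> 'k::division_ring \<Rightarrow> 'v) \<Rightarrow> 'v set set \<Rightarrow> 'v set set \<Rightarrow> 'v set set" where
  "pjoin sm S T = {P \<in> proj_points sm. P \<subseteq> span_r sm (\<Union>S \<union> \<Union>T)}"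

text \<open>A partially defined map is given by its domain D (a set of points) and
a function f defined on D. Image of a set of points M:\<close>
definition pimg :: "'a set \<Rightarrow> ('a \<Rightarrow> 'b) \<Rightarrow> 'a set \<Rightarrow> 'b set" where
  "pimg D f M = f ` (M \<inter> D)"

definition partial_map ::
  "('v::ab_group_add \<Rightarrow> 'k::division_ring \<Rightarrow> 'v) \<Rightarrow> ('w::ab_group_add \<Rightarrow> 'k2::division_ring \<Rightarrow> 'w)
   \<Rightarrow> 'v set set \<Rightarrow> ('v set \<Rightarrow> 'w set) \<Rightarrow> bool" where
  "partial_map sm sm' D f \<longleftrightarrow> D \<subseteq> proj_points sm \<and> f ` D \<subseteq> proj_points sm'"

definition weak_linear ::
  "('v::ab_group_add \<Rightarrow> 'k::division_ring \<Rightarrow> 'v) \<Rightarrow> ('w::ab_group_add \<Rightarrow> 'k2::division_ring \<Rightarrow> 'w)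
   \<Rightarrow> 'v set set \<Rightarrow> ('v set \<Rightarrow> 'w set) \<Rightarrow> bool" where
  "weak_linear sm sm' D f \<longleftrightarrow>
     (\<forall>X\<in>proj_points sm. \<forall>Y\<in>proj_points sm. X \<noteq> Y \<longrightarrow>
        pimg D f (pjoin sm {X} {Y}) \<subseteq> pjoin sm' (pimg D f {X}) (pimg D f {Y}))"

definition linear_map ::
  "('v::ab_group_add \<Rightarrow> 'k::division_ring \<Rightarrow> 'v) \<Rightarrow> ('w::ab_group_add \<Rightarrow> 'k2::division_ring \<Rightarrow> 'w)
   \<Rightarrow> 'v set set \<Rightarrow> ('v set \<Rightarrow> 'w set) \<Rightarrow> bool" where
  "linear_map sm sm' D f \<longleftrightarrow>
     (\<forall>X\<in>proj_points sm. \<forall>Y\<in>proj_points sm. X \<noteq> Y \<longrightarrow>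
        pimg D f (pjoin sm {X} {Y}) = pjoin sm' (pimg D f {X}) (pimg D f {Y})) \<and>
     (\<forall>X\<in>D. \<forall>Y\<in>D. X \<noteq> Y \<and> f X = f Y \<longrightarrow>
        (\<exists>Z\<in>pjoin sm {X} {Y}. Z \<in> proj_points sm - D))"

definition triangle :: "('w::ab_group_add \<Rightarrow> 'k2::division_ring \<Rightarrow> 'w) \<Rightarrow> 'w set \<Rightarrow> 'w set \<Rightarrow> 'w set \<Rightarrow> bool" where
  "triangle sm' A B C \<longleftrightarrow> A \<in> proj_points sm' \<and> B \<in> proj_points sm' \<and> C \<in> proj_points sm' \<and>
     A \<noteq> B \<and> C \<notin> pjoin sm' {A} {B}"

definition ring_mono :: "('k::division_ring \<Rightarrow> 'k2::division_ring) \<Rightarrow> bool" where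
  "ring_mono g \<longleftrightarrow> inj g \<and> (\<forall>a b. g (a + b) = g a + g b) \<and> (\<forall>a b. g (a * b) = g a * g b) \<and> g 1 = 1"

end

theory Submission
  imports Defs
begin

locale rvs =
  fixes sm :: "'v::ab_group_add \<Rightarrow> 'k::division_ring \<Rightarrow> 'v"
  assumes rvs: "right_vs sm"
begin

lemma sm_one[simp]: "sm v 1 = v" using rvs unfolding right_vs_def by blast
lemma sm_assoc[simp]: "sm (sm v a) b = sm v (a*b)" using rvs unfolding right_vs_def by metis
lemma sm_addv[simp]: "sm (v+w) a = sm v a + sm w a" using rvs unfolding right_vs_def by blast
lemma sm_adds[simp]: "sm v (a+b) = sm v a + sm v b" using rvs unfolding right_vs_def by blast
lemma sm_zero_s[simp]: "sm v 0 = 0"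
  using sm_adds[of v 0 0] by simp
lemma sm_zero_v[simp]: "sm 0 a = 0"
  using sm_addv[of 0 0 a] by simp
lemma sm_neg_s[simp]: "sm v (-a) = - sm v a"
proof -
  have "sm v a + sm v (-a) = 0" using sm_adds[of v a "-a"] by simp
  then show ?thesis by (metis add_eq_0_iff)
qed
lemma sm_neg_v[simp]: "sm (-v) a = - sm v a"
proof -
  have "sm v a + sm (-v) a = 0" using sm_addv[of v "-v" a] by simp
  then show ?thesis by (metis add_eq_0_iff)
qed
lemma sm_diff_v[simp]: "sm (v - w) a = sm v a - sm w a"
  using sm_addv[of v "-w" a] by simp
lemma sm_diff_s[simp]: "sm v (a - b) = sm v a - sm v b"
  using sm_adds[of v a "-b"] by simp
lemma sm_eq0[simp]: "sm v a = 0 \<longleftrightarrow> v = 0 \<or> a = 0"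
proof
  assume h: "sm v a = 0"
  show "v = 0 \<or> a = 0"
  proof (cases "a = 0")
    case False
    have "v = sm (sm v a) (inverse a)" using False by simp
    then show ?thesis using h by simp
  qed simp
qed auto

lemma sm_cancel: "a \<noteq> 0 \<Longrightarrow> sm v a = sm w a \<Longrightarrow> v = w"
  using sm_diff_v[of v w a] sm_eq0[of "v-w" a] by simp

definition pt where "pt v = span_r sm {v}"
definition lin2 where "lin2 u w = {sm u a + sm w b | a b. True}"

lemma subspace_lin2: "subspace_r sm (lin2 u w)"
  unfolding subspace_r_def lin2_def
proof (intro conjI ballI allI)
  show "0 \<in> {sm u a + sm w b |a b. True}" by (rule CollectI, rule exI[of _ 0], rule exI[of _ 0]) simp
next
  fix p q assume "p \<in> {sm u a + sm w b |a b. True}" "q \<in> {sm u a + sm w b |a b. True}"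
  then obtain a b c d where "p = sm u a + sm w b" "q = sm u c + sm w d" by blast
  then have "p + q = sm u (a+c) + sm w (b+d)" by (simp add: algebra_simps)
  then show "p + q \<in> {sm u a + sm w b |a b. True}" by blast
next
  fix p k assume "p \<in> {sm u a + sm w b |a b. True}"
  then obtain a b where "p = sm u a + sm w b" by blast
  then have "sm p k = sm u (a*k) + sm w (b*k)" by simp
  then show "sm p k \<in> {sm u a + sm w b |a b. True}" by blast
qed

lemma lin2_mem: "sm u a + sm w b \<in> lin2 u w" unfolding lin2_def by blast
lemma lin2_memE: "p \<in> lin2 u w \<Longrightarrow> (\<And>a b. p = sm u a + sm w b \<Longrightarrow> P) \<Longrightarrow> P"
  unfolding lin2_def by blast
lemma lin2_u: "u \<in> lin2 u w" using lin2_mem[of u 1 w 0] by simp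
lemma lin2_w: "w \<in> lin2 u w" using lin2_mem[of u 0 w 1] by simp
lemma lin2_sym: "lin2 u w = lin2 w u" unfolding lin2_def by (auto simp: add.commute)

lemma sub_closed_sm: "subspace_r sm S \<Longrightarrow> x \<in> S \<Longrightarrow> sm x a \<in> S"
  unfolding subspace_r_def by blast
lemma sub_closed_add: "subspace_r sm S \<Longrightarrow> x \<in> S \<Longrightarrow> y \<in> S \<Longrightarrow> x + y \<in> S"
  unfolding subspace_r_def by blast
lemma sub_zero: "subspace_r sm S \<Longrightarrow> 0 \<in> S"
  unfolding subspace_r_def by blast

lemma lin2_sub: "subspace_r sm S \<Longrightarrow> u \<in> S \<Longrightarrow> w \<in> S \<Longrightarrow> lin2 u w \<subseteq> S"
  by (auto elim!: lin2_memE intro!: sub_closed_add sub_closed_sm)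

lemma span_least: "subspace_r sm S \<Longrightarrow> A \<subseteq> S \<Longrightarrow> span_r sm A \<subseteq> S"
  unfolding span_r_def by blast
lemma span_sup: "A \<subseteq> span_r sm A"
  unfolding span_r_def by blast
lemma subspace_span: "subspace_r sm (span_r sm A)"
  unfolding span_r_def subspace_r_def by blast
lemma span_subspace: "subspace_r sm S \<Longrightarrow> span_r sm S = S"
  using span_least[of S S] span_sup[of S] by blast

lemma subspace_range: "subspace_r sm (range (sm v))"
  unfolding subspace_r_def
proof (intro conjI ballI allI)
  show "0 \<in> range (sm v)" using sm_zero_s[of v] by (metis rangeI)
next
  fix p q assume "p \<in> range (sm v)" "q \<in> range (sm v)"
  then obtain a b where "p = sm v a" "q = sm v b" by blast
  then show "p + q \<in> range (sm v)" by (metis sm_adds rangeI)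
next
  fix p k assume "p \<in> range (sm v)"
  then obtain a where "p = sm v a" by blast
  then show "sm p k \<in> range (sm v)" by (metis sm_assoc rangeI)
qed

lemma pt_eq: "pt v = range (sm v)"
proof
  show "pt v \<subseteq> range (sm v)" unfolding pt_def
    by (rule span_least[OF subspace_range]) (metis rangeI sm_one singletonD subsetI)
  show "range (sm v) \<subseteq> pt v" unfolding pt_def
    using sub_closed_sm[OF subspace_span] span_sup[of "{v}"] by blast
qed

lemma pt_mem: "sm v a \<in> pt v" by (simp add: pt_eq)
lemma pt_self: "v \<in> pt v" using pt_mem[of v 1] by simp
lemma pt_memE: "p \<in> pt v \<Longrightarrow> (\<And>a. p = sm v a \<Longrightarrow> P) \<Longrightarrow> P" by (auto simp: pt_eq)
lemma pt_zero: "pt 0 = {0}" by (auto simp: pt_eq)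
lemma subspace_pt: "subspace_r sm (pt v)" by (simp add: pt_eq subspace_range)

lemma pt_eqI: assumes "w \<in> pt u" "w \<noteq> 0" shows "pt w = pt u"
proof -
  obtain k where k: "w = sm u k" using assms(1) by (auto elim: pt_memE)
  have "k \<noteq> 0" using k assms(2) by auto
  show ?thesis
  proof
    show "pt w \<subseteq> pt u" using k by (auto simp: pt_eq)
    show "pt u \<subseteq> pt w"
    proof
      fix p assume "p \<in> pt u"
      then obtain a where "p = sm u a" by (auto elim: pt_memE)
      then have "p = sm w (inverse k * a)" using k \<open>k \<noteq> 0\<close> by (simp add: mult.assoc[symmetric])
      then show "p \<in> pt w" by (simp add: pt_mem)
    qed
  qed
qed

lemma pt_sm: "k \<noteq> 0 \<Longrightarrow> v \<noteq> 0 \<Longrightarrow> pt (sm v k) = pt v"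
  by (rule pt_eqI) (auto simp: pt_mem)

lemma pt_eq_iff: assumes "u \<noteq> 0" shows "pt u = pt w \<longleftrightarrow> (\<exists>k. k \<noteq> 0 \<and> w = sm u k)"
proof
  assume h: "pt u = pt w"
  have "w \<noteq> 0" using h assms pt_self[of u] pt_zero by auto
  moreover have "w \<in> pt u" using h pt_self by auto
  ultimately show "\<exists>k. k \<noteq> 0 \<and> w = sm u k" by (metis pt_memE sm_zero_s)
next
  assume "\<exists>k. k \<noteq> 0 \<and> w = sm u k"
  then show "pt u = pt w" using pt_sm assms by auto
qed

lemma pt_sub_iff: "subspace_r sm S \<Longrightarrow> pt v \<subseteq> S \<longleftrightarrow> v \<in> S"
  using pt_self[of v] by (auto simp: pt_eq intro: sub_closed_sm)

lemma span_pts: "span_r sm (pt u \<union> pt w) = lin2 u w"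
proof
  show "span_r sm (pt u \<union> pt w) \<subseteq> lin2 u w"
    by (rule span_least[OF subspace_lin2])
       (auto simp: pt_eq intro: lin2_mem[of u _ w 0, simplified] lin2_mem[of u 0 w, simplified])
  show "lin2 u w \<subseteq> span_r sm (pt u \<union> pt w)"
    by (rule lin2_sub[OF subspace_span]) (use span_sup pt_self in blast)+
qed

lemma span_empty: "span_r sm {} = {0}"
proof -
  have "subspace_r sm {0}" unfolding subspace_r_def by simp
  then show ?thesis using span_least[of "{0}" "{}"] sub_zero[OF subspace_span[of "{}"]] by blast
qed

lemma proj_points_iff: "P \<in> proj_points sm \<longleftrightarrow> (\<exists>v. v \<noteq> 0 \<and> P = pt v)"
  unfolding proj_points_def pt_def by blast

lemma pt_in_pp: "v \<noteq> 0 \<Longrightarrow> pt v \<in> proj_points sm"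
  using proj_points_iff by blast

lemma pjoin2: "pjoin sm {pt u} {pt w} = {pt p | p. p \<noteq> 0 \<and> p \<in> lin2 u w}"
  unfolding pjoin_def using pt_sub_iff[OF subspace_lin2] by (auto simp: proj_points_iff span_pts)

lemma pt_in_pjoin2: "p \<noteq> 0 \<Longrightarrow> p \<in> lin2 u w \<Longrightarrow> pt p \<in> pjoin sm {pt u} {pt w}"
  unfolding pjoin2 by blast

lemma pt_pt_sub: "p \<noteq> 0 \<Longrightarrow> pt p \<subseteq> pt v \<longleftrightarrow> pt p = pt v"
  by (metis pt_eqI pt_self pt_sub_iff subspace_pt subset_refl)

lemma pjoin1: "u \<noteq> 0 \<Longrightarrow> pjoin sm {pt u} {} = {pt u}"
  unfolding pjoin_def using pt_pt_sub
  by (auto simp: proj_points_iff span_subspace[OF subspace_pt])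
lemma pjoin1': "u \<noteq> 0 \<Longrightarrow> pjoin sm {} {pt u} = {pt u}"
  unfolding pjoin_def using pt_pt_sub
  by (auto simp: proj_points_iff span_subspace[OF subspace_pt])
lemma pjoin_same: "u \<noteq> 0 \<Longrightarrow> pjoin sm {pt u} {pt u} = {pt u}"
  unfolding pjoin_def using pt_pt_sub
  by (auto simp: proj_points_iff span_subspace[OF subspace_pt])
lemma pjoin0: "pjoin sm {} {} = {}"
  unfolding pjoin_def using pt_self pt_zero by (auto simp: proj_points_iff span_empty)

lemma indep2: assumes "u \<noteq> 0" "w \<noteq> 0" "pt u \<noteq> pt w" "sm u a + sm w b = 0"
  shows "a = 0 \<and> b = 0"
proof (cases "b = 0")
  case True then show ?thesis using assms by simp
next
  case False
  have "sm w b = sm u (-a)" using assms(4) by (simp add: add_eq_0_iff)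
  then have "sm (sm w b) (inverse b) = sm u (- a * inverse b)" by simp
  then have "w = sm u (- a * inverse b)" using False by simp
  then have "w \<in> pt u" by (metis pt_mem)
  then show ?thesis using pt_eqI assms by metis
qed

lemma comb2_inj: assumes "u \<noteq> 0" "w \<noteq> 0" "pt u \<noteq> pt w" "sm u a + sm w b = sm u a' + sm w b'"
  shows "a = a' \<and> b = b'"
proof -
  have "sm u (a - a') + sm w (b - b') = 0" using assms(4) by (simp add: algebra_simps)
  from indep2[OF assms(1-3) this] show ?thesis by simp
qed

definition ind3 where "ind3 u w z \<longleftrightarrow> u \<noteq> 0 \<and> w \<noteq> 0 \<and> pt u \<noteq> pt w \<and> z \<notin> lin2 u w"

lemma indep3: assumes "ind3 u w z" "sm u a + sm w b + sm z c = 0"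
  shows "a = 0 \<and> b = 0 \<and> c = 0"
proof (cases "c = 0")
  case True then show ?thesis using assms indep2[of u w a b] unfolding ind3_def by simp
next
  case False
  have "sm z c = sm u (-a) + sm w (-b)" using assms(2) by (simp add: add_eq_0_iff algebra_simps)
  then have "sm (sm z c) (inverse c) = sm u (-a * inverse c) + sm w (-b * inverse c)" by simp
  then have "z = sm u (-a * inverse c) + sm w (-b * inverse c)" using False by simp
  then have "z \<in> lin2 u w" by (metis lin2_mem)
  then show ?thesis using assms(1) unfolding ind3_def by blast
qed

lemma comb3_inj: assumes "ind3 u w z" "sm u a + sm w b + sm z c = sm u a' + sm w b' + sm z c'"
  shows "a = a' \<and> b = b' \<and> c = c'"
proof -
  have "sm u (a - a') + sm w (b - b') + sm z (c - c') = 0" using assms(2) by (simp add: algebra_simps)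
  from indep3[OF assms(1) this] show ?thesis by simp
qed

lemma exch: assumes "a = sm u c + sm w d" "d \<noteq> 0" shows "w \<in> lin2 u a"
proof -
  have "sm a (inverse d) + sm u (- c * inverse d) = w"
    using assms by (simp add: algebra_simps mult.assoc[symmetric])
  then show ?thesis using lin2_mem[of a "inverse d" u "- c * inverse d"] lin2_sym by metis
qed

lemma lin2_mono: "u \<in> lin2 a b \<Longrightarrow> w \<in> lin2 a b \<Longrightarrow> lin2 u w \<subseteq> lin2 a b"
  by (rule lin2_sub[OF subspace_lin2])

lemma line_det: assumes "a \<in> lin2 u w" "b \<in> lin2 u w" "a \<noteq> 0" "b \<noteq> 0" "pt a \<noteq> pt b"
  shows "lin2 u w \<subseteq> lin2 a b"
proof -
  obtain c d where a: "a = sm u c + sm w d" using assms(1) by (auto elim: lin2_memE)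
  show ?thesis
  proof (cases "d = 0")
    case False
    then have "w \<in> lin2 u a" using exch a by blast
    then have s1: "lin2 u w \<subseteq> lin2 a u" using lin2_mono lin2_u lin2_w lin2_sym by metis
    then have "b \<in> lin2 a u" using assms(2) by blast
    then obtain e g where b: "b = sm a e + sm u g" by (auto elim: lin2_memE)
    have "g \<noteq> 0"
    proof
      assume "g = 0"
      then have "b \<in> pt a" using b by (simp add: pt_mem)
      then show False using pt_eqI assms by metis
    qed
    then have "u \<in> lin2 a b" using exch b by blast
    then have "lin2 a u \<subseteq> lin2 a b" using lin2_mono lin2_u by metis
    then show ?thesis using s1 by blast
  next
    case True
    then have "c \<noteq> 0" using a assms(3) by auto
    have "sm a (inverse c) = u" using a True \<open>c \<noteq> 0\<close> by simp
    then have "u \<in> lin2 w a" using lin2_mem[of w 0 a "inverse c"] by simp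
    then have s1: "lin2 u w \<subseteq> lin2 w a" using lin2_mono lin2_u lin2_w by metis
    then have "b \<in> lin2 w a" using assms(2) by blast
    then obtain e g where b: "b = sm w e + sm a g" by (auto elim: lin2_memE)
    have "e \<noteq> 0"
    proof
      assume "e = 0"
      then have "b \<in> pt a" using b by (simp add: pt_mem)
      then show False using pt_eqI assms by metis
    qed
    then have "b = sm a g + sm w e" using b by (simp add: add.commute)
    then have "w \<in> lin2 a b" using exch \<open>e \<noteq> 0\<close> by blast
    then have "lin2 w a \<subseteq> lin2 a b" using lin2_mono lin2_u by metis
    then show ?thesis using s1 by blast
  qed
qed

lemma triangle_not_on_line:
  assumes "triangle sm A B C" "P \<in> proj_points sm" "Q \<in> proj_points sm"
    "A \<in> pjoin sm {P} {Q}" "B \<in> pjoin sm {P} {Q}" "C \<in> pjoin sm {P} {Q}"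
  shows False
proof -
  obtain p q where pq: "p \<noteq> 0" "P = pt p" "q \<noteq> 0" "Q = pt q" using assms(2,3) proj_points_iff by metis
  obtain a b c where abc: "a \<noteq> 0" "A = pt a" "b \<noteq> 0" "B = pt b" "c \<noteq> 0" "C = pt c"
    using assms(1) proj_points_iff unfolding triangle_def by metis
  have l: "x \<noteq> 0 \<Longrightarrow> pt x \<in> pjoin sm {pt p} {pt q} \<Longrightarrow> x \<in> lin2 p q" for x
    unfolding pjoin_def using pt_self by (auto simp: span_pts)
  have "a \<in> lin2 p q" "b \<in> lin2 p q" "c \<in> lin2 p q" using assms(4-6) abc pq l by auto
  moreover have "pt a \<noteq> pt b" using assms(1) abc unfolding triangle_def by auto
  ultimately have "c \<in> lin2 a b" using line_det abc by blast
  then have "C \<in> pjoin sm {A} {B}" using pt_in_pjoin2 abc by blast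
  then show False using assms(1) unfolding triangle_def by blast
qed

end

locale wl = V: rvs sm + W: rvs sm'
  for sm :: "'v::ab_group_add \<Rightarrow> 'k::division_ring \<Rightarrow> 'v"
  and sm' :: "'w::ab_group_add \<Rightarrow> 'k2::division_ring \<Rightarrow> 'w" +
  fixes D :: "'v set set" and f :: "'v set \<Rightarrow> 'w set"
  assumes pm: "partial_map sm sm' D f" and wlin: "weak_linear sm sm' D f"
begin

abbreviation dm where "dm v \<equiv> v \<noteq> 0 \<and> V.pt v \<in> D"

lemma pimg1: "pimg D f {X} = (if X \<in> D then {f X} else {})" by (auto simp: pimg_def)

lemma img_pt: "V.pt v \<in> D \<Longrightarrow> \<exists>r. r \<noteq> 0 \<and> f (V.pt v) = W.pt r"
proof -
  assume "V.pt v \<in> D"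
  then have "f (V.pt v) \<in> proj_points sm'" using pm unfolding partial_map_def by blast
  then show ?thesis using W.proj_points_iff by blast
qed

lemma D_pt: "X \<in> D \<Longrightarrow> \<exists>v. v \<noteq> 0 \<and> X = V.pt v"
proof -
  assume "X \<in> D"
  then have "X \<in> proj_points sm" using pm unfolding partial_map_def by blast
  then show ?thesis using V.proj_points_iff by blast
qed

lemma wlA: assumes "u \<noteq> 0" "w \<noteq> 0" "V.pt u \<noteq> V.pt w" "p \<in> V.lin2 u w" "dm p"
  shows "f (V.pt p) \<in> pjoin sm' (pimg D f {V.pt u}) (pimg D f {V.pt w})"
proof -
  have "V.pt p \<in> pjoin sm {V.pt u} {V.pt w}" using V.pt_in_pjoin2 assms by blast
  then have "f (V.pt p) \<in> pimg D f (pjoin sm {V.pt u} {V.pt w})" using assms(5) unfolding pimg_def by blast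
  then show ?thesis using wlin assms(1-3) V.pt_in_pp unfolding weak_linear_def by blast
qed

lemma wlW: assumes "dm u" "dm w" "V.pt u \<noteq> V.pt w" "p \<in> V.lin2 u w" "dm p"
  "f (V.pt u) = W.pt u'" "f (V.pt w) = W.pt w'" "u' \<noteq> 0" "w' \<noteq> 0"
  shows "\<exists>c d. sm' u' c + sm' w' d \<noteq> 0 \<and> f (V.pt p) = W.pt (sm' u' c + sm' w' d)"
proof -
  have "f (V.pt p) \<in> pjoin sm' {W.pt u'} {W.pt w'}"
    using wlA[of u w p] assms by (simp add: pimg1)
  then obtain q where q: "q \<noteq> 0" "q \<in> W.lin2 u' w'" "f (V.pt p) = W.pt q" unfolding W.pjoin2 by blast
  then obtain c d where "q = sm' u' c + sm' w' d" by (auto elim: W.lin2_memE)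
  then show ?thesis using q by blast
qed

lemma wl1: assumes "dm u" "dm w" "V.pt u \<noteq> V.pt w" "f (V.pt u) = f (V.pt w)" "p \<in> V.lin2 u w" "dm p"
  shows "f (V.pt p) = f (V.pt u)"
proof -
  obtain r where r: "r \<noteq> 0" "f (V.pt u) = W.pt r" using img_pt assms(1) by blast
  have "f (V.pt p) \<in> pjoin sm' {W.pt r} {W.pt r}"
    using wlA[of u w p] assms r by (simp add: pimg1)
  then show ?thesis using W.pjoin_same r by auto
qed

lemma wl0: assumes "u \<noteq> 0" "w \<noteq> 0" "V.pt u \<notin> D" "V.pt w \<notin> D" "V.pt u \<noteq> V.pt w" "p \<in> V.lin2 u w" "p \<noteq> 0"
  shows "V.pt p \<notin> D"
proof
  assume "V.pt p \<in> D"
  then have "f (V.pt p) \<in> pjoin sm' {} {}"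
    using wlA[of u w p] assms by (simp add: pimg1)
  then show False using W.pjoin0 by simp
qed

lemma wlh: assumes "u \<noteq> 0" "V.pt u \<notin> D" "dm w" "V.pt u \<noteq> V.pt w" "p \<in> V.lin2 u w" "dm p"
  shows "f (V.pt p) = f (V.pt w)"
proof -
  obtain r where r: "r \<noteq> 0" "f (V.pt w) = W.pt r" using img_pt assms(3) by blast
  have "f (V.pt p) \<in> pjoin sm' {} {W.pt r}"
    using wlA[of u w p] assms r by (simp add: pimg1)
  then show ?thesis using W.pjoin1' r by auto
qed

lemma exabsorb: assumes "u \<noteq> 0" "V.pt u \<notin> D" "dm w"
  shows "dm (u + w) \<and> f (V.pt (u + w)) = f (V.pt w)"
proof -
  have ne: "V.pt u \<noteq> V.pt w" using assms by auto
  have nz: "u + w \<noteq> 0"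
  proof
    assume "u + w = 0"
    then have "w = sm u (-1)" by (simp add: add_eq_0_iff)
    then have "V.pt w = V.pt u" using V.pt_sm[of "-1" u] assms(1) by simp
    then show False using ne by simp
  qed
  have d: "V.pt (u + w) \<in> D"
  proof (rule ccontr)
    assume nd: "V.pt (u + w) \<notin> D"
    have ne2: "V.pt (u + w) \<noteq> V.pt u"
    proof
      assume "V.pt (u + w) = V.pt u"
      then obtain k where "u + w = sm u k" using V.pt_eq_iff assms(1) by metis
      then have "w = sm u (k - 1)" by (simp add: algebra_simps)
      then have "V.pt w = V.pt u" using V.pt_eqI V.pt_mem assms(3) by metis
      then show False using ne by simp
    qed
    have "w = sm (u + w) 1 + sm u (-1)" by simp
    then have "w \<in> V.lin2 (u + w) u" using V.lin2_mem by metis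
    then have "V.pt w \<notin> D" using wl0[OF nz assms(1) nd assms(2) ne2] assms(3) by blast
    then show False using assms(3) by blast
  qed
  have "u + w \<in> V.lin2 u w" using V.lin2_mem[of u 1 w 1] by simp
  then show ?thesis using wlh[OF assms(1,2,3) ne] nz d by blast
qed

lemma line_dom1: assumes "dm u" "dm w" "f (V.pt u) \<noteq> f (V.pt w)" "a \<noteq> 0" "b \<noteq> 0"
  "p = sm u a + sm w b"
  shows "dm p \<and> f (V.pt p) \<noteq> f (V.pt u)"
proof -
  have ne: "V.pt u \<noteq> V.pt w" using assms(3) by auto
  have nz: "p \<noteq> 0" using V.indep2[of u w a b] assms ne by auto
  have d: "V.pt p \<in> D"
  proof (rule ccontr)
    assume nd: "V.pt p \<notin> D"
    have "V.pt (sm u (-a)) = V.pt u" using V.pt_sm[of "-a" u] assms by simp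
    then have "dm (sm u (-a))" using assms by simp
    from exabsorb[OF nz nd this] have "f (V.pt (p + sm u (-a))) = f (V.pt (sm u (-a)))" by blast
    moreover have "p + sm u (-a) = sm w b" using assms(6) by simp
    ultimately have "f (V.pt w) = f (V.pt u)" using V.pt_sm[of b w] V.pt_sm[of "-a" u] assms by simp
    then show False using assms(3) by simp
  qed
  have "f (V.pt p) \<noteq> f (V.pt u)"
  proof
    assume eq: "f (V.pt p) = f (V.pt u)"
    have ne2: "V.pt p \<noteq> V.pt u"
    proof
      assume "V.pt p = V.pt u"
      then obtain k where "p = sm u k" using V.pt_eq_iff assms(1) by metis
      then have "sm u a + sm w b = sm u k + sm w 0" using assms(6) by simp
      then show False using V.comb2_inj[of u w a b k 0] assms ne by simp
    qed
    have "w \<in> V.lin2 p u" using V.exch[OF assms(6) assms(5)] V.lin2_sym by metis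
    then have "f (V.pt w) = f (V.pt p)" using wl1[of p u w] nz d assms ne2 eq by blast
    then show False using eq assms(3) by simp
  qed
  then show ?thesis using nz d by blast
qed

lemma line_dom: assumes "dm u" "dm w" "f (V.pt u) \<noteq> f (V.pt w)" "a \<noteq> 0" "b \<noteq> 0"
  "p = sm u a + sm w b"
  shows "dm p \<and> f (V.pt p) \<noteq> f (V.pt u) \<and> f (V.pt p) \<noteq> f (V.pt w)"
  using line_dom1[OF assms] line_dom1[of w u b a p] assms by (simp add: add.commute)

lemma f_ne_pt: "f (V.pt u) \<noteq> f (V.pt w) \<Longrightarrow> V.pt u \<noteq> V.pt w" by auto

end

context wl begin

lemma norm: assumes "dm u" "dm w" "f (V.pt u) \<noteq> f (V.pt w)" "f (V.pt u) = W.pt u'" "u' \<noteq> 0"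
  shows "\<exists>w'. w' \<noteq> 0 \<and> f (V.pt w) = W.pt w' \<and> f (V.pt (u + w)) = W.pt (u' + w') \<and> dm (u + w)"
proof -
  obtain w0 where w0: "w0 \<noteq> 0" "f (V.pt w) = W.pt w0" using img_pt assms(2) by blast
  have ld: "dm (u + w) \<and> f (V.pt (u + w)) \<noteq> f (V.pt u) \<and> f (V.pt (u + w)) \<noteq> f (V.pt w)"
    using line_dom[OF assms(1-3), of 1 1 "u + w"] by simp
  have "u + w \<in> V.lin2 u w" using V.lin2_mem[of u 1 w 1] by simp
  then obtain c d where cd: "sm' u' c + sm' w0 d \<noteq> 0" "f (V.pt (u + w)) = W.pt (sm' u' c + sm' w0 d)"
    using wlW[of u w "u + w" u' w0] assms ld w0 f_ne_pt by blast
  have c: "c \<noteq> 0"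
  proof
    assume "c = 0"
    then have "f (V.pt (u + w)) = W.pt (sm' w0 d)" "d \<noteq> 0" using cd by auto
    then have "f (V.pt (u + w)) = f (V.pt w)" using W.pt_sm[of d w0] w0 by simp
    then show False using ld by simp
  qed
  have d: "d \<noteq> 0"
  proof
    assume "d = 0"
    then have "f (V.pt (u + w)) = W.pt (sm' u' c)" using cd by auto
    then have "f (V.pt (u + w)) = f (V.pt u)" using W.pt_sm[of c u'] c assms by simp
    then show False using ld by simp
  qed
  define w' where "w' = sm' w0 (d * inverse c)"
  have e: "sm' (u' + w') c = sm' u' c + sm' w0 d" unfolding w'_def using c by (simp add: mult.assoc)
  have nz: "u' + w' \<noteq> 0" using e cd by (metis W.sm_zero_v)
  have "W.pt (sm' u' c + sm' w0 d) = W.pt (u' + w')" using e W.pt_sm[of c "u' + w'"] c nz by simp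
  moreover have "W.pt w' = W.pt w0" unfolding w'_def using W.pt_sm c d w0 by simp
  moreover have "w' \<noteq> 0" unfolding w'_def using c d w0 by simp
  ultimately show ?thesis using cd w0 ld by auto
qed

end

locale plane = wl +
  fixes x y z x' y' z'
  assumes dx: "dm x" and dy: "dm y" and dz: "dm z"
    and fx: "f (V.pt x) = W.pt x'" and fy: "f (V.pt y) = W.pt y'" and fz: "f (V.pt z) = W.pt z'"
    and fxy: "f (V.pt (x + y)) = W.pt (x' + y')" and fxz: "f (V.pt (x + z)) = W.pt (x' + z')"
    and ind: "W.ind3 x' y' z'"
begin

definition Cw where "Cw a b c = sm' x' a + sm' y' b + sm' z' c"

lemma Cw_eq_iff[simp]: "Cw a b c = Cw a' b' c' \<longleftrightarrow> a = a' \<and> b = b' \<and> c = c'"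
  unfolding Cw_def using W.comb3_inj[OF ind] by blast

lemma Cw_0[simp]: "Cw a b c = 0 \<longleftrightarrow> a = 0 \<and> b = 0 \<and> c = 0"
proof -
  have "0 = Cw 0 0 0" unfolding Cw_def by simp
  then show ?thesis by (metis Cw_eq_iff)
qed

lemma Cw_sm[simp]: "sm' (Cw a b c) k = Cw (a*k) (b*k) (c*k)"
  unfolding Cw_def by simp

lemma Cw_add[simp]: "Cw a b c + Cw a' b' c' = Cw (a+a') (b+b') (c+c')"
  unfolding Cw_def by (simp add: algebra_simps)

lemma x'C: "x' = Cw 1 0 0" and y'C: "y' = Cw 0 1 0" and z'C: "z' = Cw 0 0 1"
  and xy'C: "x' + y' = Cw 1 1 0" and xz'C: "x' + z' = Cw 1 0 1"
  unfolding Cw_def by simp_all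

lemma ptCw_eq: "Cw a b c \<noteq> 0 \<Longrightarrow> W.pt (Cw a b c) = W.pt (Cw a' b' c') \<longleftrightarrow>
   (\<exists>k. k \<noteq> 0 \<and> a' = a*k \<and> b' = b*k \<and> c' = c*k)"
  using W.pt_eq_iff[of "Cw a b c" "Cw a' b' c'"] by simp

lemma ptCw_scale: "k \<noteq> 0 \<Longrightarrow> Cw a b c \<noteq> 0 \<Longrightarrow> W.pt (Cw (a*k) (b*k) (c*k)) = W.pt (Cw a b c)"
  using W.pt_sm[of k "Cw a b c"] by simp

lemma ptCw_eqE: assumes "W.pt (Cw a b c) = W.pt (Cw a' b' c')" "Cw a b c \<noteq> 0"
  obtains k where "k \<noteq> 0" "a' = a*k" "b' = b*k" "c' = c*k"
  using assms ptCw_eq by metis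

lemma fx': "f (V.pt x) = W.pt (Cw 1 0 0)" and fy': "f (V.pt y) = W.pt (Cw 0 1 0)"
  and fz': "f (V.pt z) = W.pt (Cw 0 0 1)" and fxy': "f (V.pt (x + y)) = W.pt (Cw 1 1 0)"
  and fxz': "f (V.pt (x + z)) = W.pt (Cw 1 0 1)"
  using fx fy fz fxy fxz x'C y'C z'C xy'C xz'C by simp_all

lemma gen: assumes "dm u" "dm w" "V.pt u \<noteq> V.pt w"
  "f (V.pt u) = W.pt (Cw a1 b1 c1)" "f (V.pt w) = W.pt (Cw a2 b2 c2)"
  "Cw a1 b1 c1 \<noteq> 0" "Cw a2 b2 c2 \<noteq> 0" "p = sm u s + sm w t" "dm p"
  shows "\<exists>k1 k2. Cw (a1*k1+a2*k2) (b1*k1+b2*k2) (c1*k1+c2*k2) \<noteq> 0 \<and>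
     f (V.pt p) = W.pt (Cw (a1*k1+a2*k2) (b1*k1+b2*k2) (c1*k1+c2*k2))"
proof -
  have "p \<in> V.lin2 u w" using assms(8) V.lin2_mem by simp
  from wlW[OF assms(1-3) this assms(9,4,5,6,7)] show ?thesis by simp
qed

lemma dmC: assumes "dm u" "dm w" "f (V.pt u) \<noteq> f (V.pt w)" "s \<noteq> 0" "t \<noteq> 0"
  shows "dm (sm u s + sm w t)"
  using line_dom[OF assms, of "sm u s + sm w t"] by simp

lemma neC: assumes "Cw a b c \<noteq> 0" "\<And>k. k \<noteq> 0 \<Longrightarrow> a' = a*k \<Longrightarrow> b' = b*k \<Longrightarrow> c' = c*k \<Longrightarrow> False"
  shows "W.pt (Cw a b c) \<noteq> W.pt (Cw a' b' c')"
  using assms ptCw_eq by metis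

lemma nz_basic: "Cw 1 0 0 \<noteq> 0" "Cw 0 1 0 \<noteq> 0" "Cw 0 0 1 \<noteq> 0" "Cw 1 1 0 \<noteq> 0" "Cw 1 0 1 \<noteq> 0"
  "Cw 1 1 1 \<noteq> 0" "Cw 0 1 1 \<noteq> 0" "Cw a 1 0 \<noteq> 0" "Cw a 0 1 \<noteq> 0" "Cw a 1 1 \<noteq> 0" "Cw a b 1 \<noteq> 0"
  by simp_all

lemma ne100_010: "W.pt (Cw 1 0 0) \<noteq> W.pt (Cw 0 1 0)" by (rule neC) auto
lemma ne100_001: "W.pt (Cw 1 0 0) \<noteq> W.pt (Cw 0 0 1)" by (rule neC) auto
lemma ne010_001: "W.pt (Cw 0 1 0) \<noteq> W.pt (Cw 0 0 1)" by (rule neC) auto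
lemma ne110_001: "W.pt (Cw 1 1 0) \<noteq> W.pt (Cw 0 0 1)" by (rule neC) auto
lemma ne101_010: "W.pt (Cw 1 0 1) \<noteq> W.pt (Cw 0 1 0)" by (rule neC) auto
lemma ne011_100: "W.pt (Cw 0 1 1) \<noteq> W.pt (Cw 1 0 0)" by (rule neC) auto

lemma dxy: "dm (x + y)" using dmC[OF dx dy, of 1 1] ne100_010 by (simp add: fx' fy')
lemma dxz: "dm (x + z)" using dmC[OF dx dz, of 1 1] ne100_001 by (simp add: fx' fz')
lemma dyz: "dm (y + z)" using dmC[OF dy dz, of 1 1] ne010_001 by (simp add: fy' fz')

lemma S2: "dm (x + y + z) \<and> f (V.pt (x + y + z)) = W.pt (Cw 1 1 1)"
proof -
  have d: "dm (x + y + z)" using dmC[OF dxy dz, of 1 1] ne110_001 by (simp add: fxy' fz')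
  have "V.pt (x + y) \<noteq> V.pt z" using ne110_001 fxy' fz' by auto
  then obtain k1 k2 where r1: "Cw k1 k1 k2 \<noteq> 0" "f (V.pt (x+y+z)) = W.pt (Cw k1 k1 k2)"
    using gen[OF dxy dz _ fxy' fz' _ _ _ d, of 1 1] by auto
  have "V.pt (x + z) \<noteq> V.pt y" using ne101_010 fxz' fy' by auto
  then obtain m1 m2 where r2: "f (V.pt (x+y+z)) = W.pt (Cw m1 m2 m1)"
    using gen[OF dxz dy _ fxz' fy' _ _ _ d, of 1 1] by (auto simp: algebra_simps)
  obtain k where k: "k \<noteq> 0" "m1 = k1*k" "m2 = k1*k" "m1 = k2*k"
    using ptCw_eqE[OF _ r1(1)] r1(2) r2 by metis
  have "k2 = k1" using k by simp
  then have "k1 \<noteq> 0" using r1 by auto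
  then show ?thesis using d r1 \<open>k2 = k1\<close> ptCw_scale[of k1 1 1 1] by simp
qed

lemma S3: "f (V.pt (y + z)) = W.pt (Cw 0 1 1)"
proof -
  have "V.pt y \<noteq> V.pt z" using ne010_001 fy' fz' by auto
  then obtain k1 k2 where r1: "Cw 0 k1 k2 \<noteq> 0" "f (V.pt (y + z)) = W.pt (Cw 0 k1 k2)"
    using gen[OF dy dz _ fy' fz' _ _ _ dyz, of 1 1] by auto
  have "W.pt (Cw 1 1 1) \<noteq> W.pt (Cw 1 0 0)" by (rule neC) auto
  then have ne2: "V.pt (x + y + z) \<noteq> V.pt x" using S2 fx' by auto
  have eq: "y + z = sm (x + y + z) 1 + sm x (-1)" by (simp add: algebra_simps)
  obtain m1 m2 where r2: "f (V.pt (y + z)) = W.pt (Cw (m1 + m2) m1 m1)"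
    using gen[OF conjunct1[OF S2] dx ne2 conjunct2[OF S2] fx' nz_basic(6) nz_basic(1) eq dyz] by auto
  obtain k where k: "k \<noteq> 0" "m1 + m2 = 0*k" "m1 = k1*k" "m1 = k2*k"
    using ptCw_eqE[OF _ r1(1)] r1(2) r2 by metis
  have "k2 = k1" using k by simp
  then have "k1 \<noteq> 0" using r1 by auto
  then show ?thesis using r1 \<open>k2 = k1\<close> ptCw_scale[of k1 0 1 1] by simp
qed

lemma u1: "W.pt (Cw s 1 c) = W.pt (Cw t 1 c') \<Longrightarrow> s = t \<and> c = c'"
  by (erule ptCw_eqE) auto
lemma u2: "W.pt (Cw s b 1) = W.pt (Cw t b' 1) \<Longrightarrow> s = t \<and> b = b'"
  by (erule ptCw_eqE) auto

definition sig where "sig a = (THE s. f (V.pt (sm x a + y)) = W.pt (Cw s 1 0))"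

lemma S4: "dm (sm x a + y) \<and> f (V.pt (sm x a + y)) = W.pt (Cw (sig a) 1 0)"
proof -
  have ex: "\<exists>s. dm (sm x a + y) \<and> f (V.pt (sm x a + y)) = W.pt (Cw s 1 0)"
  proof (cases "a = 0")
    case True then show ?thesis using dy fy' by auto
  next
    case False
    have fne: "f (V.pt x) \<noteq> f (V.pt y)" using ne100_010 fx' fy' by simp
    have d: "dm (sm x a + y)" using dmC[OF dx dy fne False, of 1] by simp
    have ld: "f (V.pt (sm x a + y)) \<noteq> f (V.pt x)" using line_dom[OF dx dy fne False, of 1] by simp
    obtain k1 k2 where r: "Cw k1 k2 0 \<noteq> 0" "f (V.pt (sm x a + y)) = W.pt (Cw k1 k2 0)"
      using gen[OF dx dy f_ne_pt[OF fne] fx' fy' _ _ _ d, of a 1] by auto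
    have "k2 \<noteq> 0"
    proof
      assume "k2 = 0"
      then have "k1 \<noteq> 0" using r by auto
      then have "W.pt (Cw k1 k2 0) = W.pt (Cw 1 0 0)" using \<open>k2 = 0\<close> ptCw_scale[of k1 1 0 0] by simp
      then show False using ld r fx' by simp
    qed
    then have "Cw k1 k2 0 = Cw ((k1 * inverse k2) * k2) (1*k2) (0*k2)" by (simp add: mult.assoc)
    then have "W.pt (Cw k1 k2 0) = W.pt (Cw (k1 * inverse k2) 1 0)"
      using ptCw_scale[OF \<open>k2 \<noteq> 0\<close>, of "k1 * inverse k2" 1 0] by simp
    then show ?thesis using d r by auto
  qed
  then obtain s where s: "dm (sm x a + y)" "f (V.pt (sm x a + y)) = W.pt (Cw s 1 0)" by blast
  have "sig a = s" unfolding sig_def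
  proof (rule the_equality)
    fix t assume "f (V.pt (sm x a + y)) = W.pt (Cw t 1 0)"
    then show "t = s" using s u1[of t 0 s 0] by simp
  qed (use s in simp)
  then show ?thesis using s by simp
qed

lemma sig0: "sig 0 = 0"
  using S4[of 0] fy' u1[of "sig 0" 0 0 0] by simp

lemma sig1: "sig 1 = 1"
  using S4[of 1] fxy' u1[of "sig 1" 0 1 0] by simp

lemma S5: "dm (sm x a + y + z) \<and> f (V.pt (sm x a + y + z)) = W.pt (Cw (sig a) 1 1)"
proof -
  have ne: "W.pt (Cw (sig a) 1 0) \<noteq> W.pt (Cw 0 0 1)" by (rule neC) auto
  have d: "dm (sm x a + y + z)"
    using dmC[OF conjunct1[OF S4[of a]] dz, of 1 1] ne S4[of a] fz' by simp
  have "V.pt (sm x a + y) \<noteq> V.pt z" using ne S4[of a] fz' by auto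
  then obtain k1 k2 where r1: "Cw (sig a * k1) k1 k2 \<noteq> 0" "f (V.pt (sm x a + y + z)) = W.pt (Cw (sig a * k1) k1 k2)"
    using gen[OF conjunct1[OF S4[of a]] dz _ conjunct2[OF S4[of a]] fz' _ _ _ d, of 1 1] by auto
  have ne2: "V.pt (y + z) \<noteq> V.pt x" using ne011_100 S3 fx' by auto
  have eq: "sm x a + y + z = sm (y + z) 1 + sm x a" by (simp add: algebra_simps)
  obtain m1 m2 where r2: "f (V.pt (sm x a + y + z)) = W.pt (Cw m2 m1 m1)"
    using gen[OF dyz dx ne2 S3 fx' nz_basic(7) nz_basic(1) eq d] by auto
  obtain k where k: "k \<noteq> 0" "m2 = sig a * k1 * k" "m1 = k1*k" "m1 = k2*k"
    using ptCw_eqE[OF _ r1(1)] r1(2) r2 by metis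
  have "k2 = k1" using k by simp
  then have "k1 \<noteq> 0" using r1 by auto
  then show ?thesis using d r1 \<open>k2 = k1\<close> ptCw_scale[of k1 "sig a" 1 1] by simp
qed

lemma S6: "dm (sm x a + z) \<and> f (V.pt (sm x a + z)) = W.pt (Cw (sig a) 0 1)"
proof (cases "a = 0")
  case True then show ?thesis using dz fz' sig0 by simp
next
  case False
  have fne: "f (V.pt x) \<noteq> f (V.pt z)" using ne100_001 fx' fz' by simp
  have d: "dm (sm x a + z)" using dmC[OF dx dz fne False, of 1] by simp
  obtain k1 k2 where r1: "Cw k1 0 k2 \<noteq> 0" "f (V.pt (sm x a + z)) = W.pt (Cw k1 0 k2)"
    using gen[OF dx dz f_ne_pt[OF fne] fx' fz' _ _ _ d, of a 1] by auto
  have "W.pt (Cw k1 0 k2) \<noteq> W.pt (Cw 0 1 0)" by (rule neC) (use r1 in auto)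
  then have ne2: "V.pt (sm x a + z) \<noteq> V.pt y" using r1 fy' by auto
  have eq: "sm x a + y + z = sm (sm x a + z) 1 + sm y 1" by (simp add: algebra_simps)
  obtain m1 m2 where r2: "f (V.pt (sm x a + y + z)) = W.pt (Cw (k1 * m1) m2 (k2 * m1))"
    using gen[OF d dy ne2 r1(2) fy' r1(1) nz_basic(2) eq conjunct1[OF S5[of a]]] by auto
  obtain k where k: "k \<noteq> 0" "k1 * m1 = sig a * k" "m2 = 1 * k" "k2 * m1 = 1 * k"
    using ptCw_eqE[OF _ nz_basic(10)[of "sig a"]] S5[of a] r2 by metis
  have "m1 \<noteq> 0" using k by auto
  have "k1 * m1 = (sig a * k2) * m1" using k by (simp add: mult.assoc)
  then have e: "k1 = sig a * k2" using \<open>m1 \<noteq> 0\<close> by simp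
  then have "k2 \<noteq> 0" using r1 by auto
  then show ?thesis using d r1 e ptCw_scale[of k2 "sig a" 0 1] by simp
qed

lemma S7: "sig (a + b) = sig a + sig b"
proof -
  have ne: "W.pt (Cw (sig a) 1 0) \<noteq> W.pt (Cw (sig b) 0 1)" by (rule neC) auto
  then have ne2: "V.pt (sm x a + y) \<noteq> V.pt (sm x b + z)" using S4[of a] S6[of b] by auto
  have eq: "sm x (a + b) + y + z = sm (sm x a + y) 1 + sm (sm x b + z) 1" by (simp add: algebra_simps)
  obtain k1 k2 where r: "f (V.pt (sm x (a + b) + y + z)) = W.pt (Cw (sig a * k1 + sig b * k2) k1 k2)"
    using gen[OF conjunct1[OF S4[of a]] conjunct1[OF S6[of b]] ne2 conjunct2[OF S4[of a]]
        conjunct2[OF S6[of b]] nz_basic(8) nz_basic(9) eq conjunct1[OF S5[of "a+b"]]] by auto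
  obtain k where k: "k \<noteq> 0" "sig a * k1 + sig b * k2 = sig (a + b) * k" "k1 = 1 * k" "k2 = 1 * k"
    using ptCw_eqE[OF _ nz_basic(10)[of "sig (a+b)"]] S5[of "a+b"] r by metis
  then have "(sig a + sig b) * k = sig (a + b) * k" by (simp add: distrib_right)
  then show ?thesis using k(1) by simp
qed

lemma S8: "sig (a * b) = sig a * sig b"
proof (cases "b = 0")
  case True then show ?thesis using sig0 by simp
next
  case bnz: False
  have ne1: "W.pt (Cw 1 1 0) \<noteq> W.pt (Cw 0 0 1)" by (rule ne110_001)
  have fne1: "f (V.pt (x + y)) \<noteq> f (V.pt z)" using ne1 fxy' fz' by simp
  define R where "R = sm x b + sm y b + z"
  have eqR1: "R = sm (x + y) b + sm z 1" unfolding R_def by simp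
  have dR: "dm R" using dmC[OF dxy dz fne1 bnz, of 1] eqR1 by simp
  obtain k1 k2 where r1: "Cw k1 k1 k2 \<noteq> 0" "f (V.pt R) = W.pt (Cw k1 k1 k2)"
    using gen[OF dxy dz f_ne_pt[OF fne1] fxy' fz' nz_basic(4) nz_basic(3) eqR1 dR] by auto
  have "W.pt (Cw (sig b) 0 1) \<noteq> W.pt (Cw 0 1 0)" by (rule neC) auto
  then have ne2: "V.pt (sm x b + z) \<noteq> V.pt y" using S6[of b] fy' by auto
  have eqR2: "R = sm (sm x b + z) 1 + sm y b" unfolding R_def by (simp add: algebra_simps)
  obtain m1 m2 where r2: "f (V.pt R) = W.pt (Cw (sig b * m1) m2 m1)"
    using gen[OF conjunct1[OF S6[of b]] dy ne2 conjunct2[OF S6[of b]] fy' nz_basic(9) nz_basic(2) eqR2 dR]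
    by auto
  obtain k where k: "k \<noteq> 0" "sig b * m1 = k1 * k" "m2 = k1 * k" "m1 = k2 * k"
    using ptCw_eqE[OF _ r1(1)] r1(2) r2 by metis
  have "k1 * k = (sig b * k2) * k" using k by (simp add: mult.assoc)
  then have ek: "k1 = sig b * k2" using k(1) by simp
  then have "k2 \<noteq> 0" using r1 by auto
  then have fR: "f (V.pt R) = W.pt (Cw (sig b) (sig b) 1)"
    using r1 ek ptCw_scale[of k2 "sig b" "sig b" 1] by simp
  define Q where "Q = sm x (a * b) + sm y b + z"
  have ne3: "W.pt (Cw (sig a) 1 0) \<noteq> W.pt (Cw 0 0 1)" by (rule neC) auto
  then have fne3: "f (V.pt (sm x a + y)) \<noteq> f (V.pt z)" using S4[of a] fz' by simp
  have eqQ1: "Q = sm (sm x a + y) b + sm z 1" unfolding Q_def by simp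
  have dQ: "dm Q" using dmC[OF conjunct1[OF S4[of a]] dz fne3 bnz, of 1] eqQ1 by simp
  obtain n1 n2 where q1: "Cw (sig a * n1) n1 n2 \<noteq> 0" "f (V.pt Q) = W.pt (Cw (sig a * n1) n1 n2)"
    using gen[OF conjunct1[OF S4[of a]] dz f_ne_pt[OF fne3] conjunct2[OF S4[of a]] fz' nz_basic(8)
       nz_basic(3) eqQ1 dQ] by auto
  have "W.pt (Cw (sig b) (sig b) 1) \<noteq> W.pt (Cw 1 0 0)" by (rule neC) auto
  then have ne4: "V.pt R \<noteq> V.pt x" using fR fx' by auto
  have eqQ2: "Q = sm R 1 + sm x (a * b - b)" unfolding Q_def R_def by (simp add: algebra_simps)
  obtain p1 p2 where q2: "f (V.pt Q) = W.pt (Cw (sig b * p1 + p2) (sig b * p1) p1)"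
    using gen[OF dR dx ne4 fR fx' nz_basic(11) nz_basic(1) eqQ2 dQ] by auto
  have "W.pt (Cw (sig (a*b)) 0 1) \<noteq> W.pt (Cw 0 1 0)" by (rule neC) auto
  then have ne5: "V.pt (sm x (a*b) + z) \<noteq> V.pt y" using S6[of "a*b"] fy' by auto
  have eqQ3: "Q = sm (sm x (a*b) + z) 1 + sm y b" unfolding Q_def by (simp add: algebra_simps)
  obtain s1 s2 where q3: "f (V.pt Q) = W.pt (Cw (sig (a*b) * s1) s2 s1)"
    using gen[OF conjunct1[OF S6[of "a*b"]] dy ne5 conjunct2[OF S6[of "a*b"]] fy' nz_basic(9) nz_basic(2)
       eqQ3 dQ] by auto
  obtain k where k: "k \<noteq> 0" "sig b * p1 + p2 = sig a * n1 * k" "sig b * p1 = n1 * k" "p1 = n2 * k"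
    using ptCw_eqE[OF _ q1(1)] q1(2) q2 by metis
  obtain k' where k': "k' \<noteq> 0" "sig (a*b) * s1 = sig a * n1 * k'" "s2 = n1 * k'" "s1 = n2 * k'"
    using ptCw_eqE[OF _ q1(1)] q1(2) q3 by metis
  have "n1 * k = (sig b * n2) * k" using k by (simp add: mult.assoc)
  then have en: "n1 = sig b * n2" using k(1) by simp
  then have "n2 \<noteq> 0" using q1 by auto
  have "(sig (a*b) * n2) * k' = (sig a * sig b * n2) * k'" using k' en by (simp add: mult.assoc)
  then have "sig (a*b) * n2 = (sig a * sig b) * n2" using k'(1) mult_cancel_right by blast
  then show ?thesis using \<open>n2 \<noteq> 0\<close> by simp
qed

lemma sig_inj: "sig a = sig b \<Longrightarrow> a = b"
proof (rule ccontr)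
  assume e: "sig a = sig b" and ab: "a \<noteq> b"
  define pa where "pa = sm x a + y"
  define pb where "pb = sm x b + y"
  have da: "dm pa" and db: "dm pb" using S4 unfolding pa_def pb_def by blast+
  have fab: "f (V.pt pa) = f (V.pt pb)" using S4[of a] S4[of b] e unfolding pa_def pb_def by simp
  have fne: "f (V.pt x) \<noteq> f (V.pt y)" using ne100_010 fx' fy' by simp
  have nxy: "V.pt x \<noteq> V.pt y" using fne by auto
  have npab: "V.pt pa \<noteq> V.pt pb"
  proof
    assume "V.pt pa = V.pt pb"
    then obtain k where "pb = sm pa k" using V.pt_eq_iff da by metis
    then have "sm x b + sm y 1 = sm x (a*k) + sm y k" unfolding pa_def pb_def by simp
    from V.comb2_inj[OF _ _ nxy this] dx dy have "b = a * k" "1 = k" by auto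
    then show False using ab by simp
  qed
  define c where "c = inverse (a - b)"
  have "sm pa c + sm pb (-c) = sm x ((a - b) * c)" unfolding pa_def pb_def
    by (simp add: algebra_simps)
  then have "x = sm pa c + sm pb (-c)" unfolding c_def using ab by simp
  then have "x \<in> V.lin2 pa pb" by (metis V.lin2_mem)
  then have "f (V.pt x) = f (V.pt pa)" using wl1[OF da db npab fab] dx by blast
  moreover have "W.pt (Cw (sig a) 1 0) \<noteq> W.pt (Cw 1 0 0)" by (rule neC) auto
  ultimately show False using S4[of a] fx' unfolding pa_def by simp
qed

lemma sig_mono: "ring_mono sig"
  unfolding ring_mono_def using sig_inj S7 S8 sig1 by (auto intro: injI)

lemma surj_plane: assumes "ring_mono sig \<longrightarrow> surj sig"
  and "Q \<in> pjoin sm' {f (V.pt x)} {f (V.pt y)}"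
  shows "Q = f (V.pt x) \<or> (\<exists>a. dm (sm x a + y) \<and> Q = f (V.pt (sm x a + y)))"
proof -
  have sj: "surj sig" using assms(1) sig_mono by blast
  have "Q \<in> pjoin sm' {W.pt x'} {W.pt y'}" using assms(2) fx fy by simp
  then obtain q where q: "q \<noteq> 0" "q \<in> W.lin2 x' y'" "Q = W.pt q"
    unfolding W.pjoin2 by blast
  obtain c d where "q = sm' x' c + sm' y' d" using q(2) by (auto elim: W.lin2_memE)
  then have qc: "q = Cw c d 0" unfolding Cw_def by simp
  show ?thesis
  proof (cases "d = 0")
    case True
    then have "c \<noteq> 0" using q qc by simp
    then have "Q = W.pt (Cw 1 0 0)" using q qc True ptCw_scale[of c 1 0 0] by simp
    then show ?thesis using fx' by simp
  next
    case False
    then have "Cw c d 0 = Cw ((c * inverse d) * d) (1*d) (0*d)" by (simp add: mult.assoc)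
    then have "Q = W.pt (Cw (c * inverse d) 1 0)"
      using q qc ptCw_scale[OF False, of "c * inverse d" 1 0] by simp
    moreover obtain a where "c * inverse d = sig a" using sj by (metis surjD)
    ultimately show ?thesis using S4[of a] by auto
  qed
qed

end

context wl begin

lemma mkplane: assumes "dm x" "dm y" "dm z" "f (V.pt x) \<noteq> f (V.pt y)"
  "f (V.pt z) \<notin> pjoin sm' {f (V.pt x)} {f (V.pt y)}"
  shows "\<exists>x' y' z'. plane sm sm' D f x y z x' y' z'"
proof -
  obtain x' where x': "x' \<noteq> 0" "f (V.pt x) = W.pt x'" using img_pt assms(1) by blast
  obtain y0 where y0: "y0 \<noteq> 0" "f (V.pt y) = W.pt y0" using img_pt assms(2) by blast
  have "f (V.pt x) \<in> pjoin sm' {f (V.pt x)} {f (V.pt y)}"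
    using W.pt_in_pjoin2[OF x'(1) W.lin2_u[of x' y0]] x' y0 by simp
  then have fxz: "f (V.pt x) \<noteq> f (V.pt z)" using assms(5) by auto
  obtain y' where y': "y' \<noteq> 0" "f (V.pt y) = W.pt y'" "f (V.pt (x + y)) = W.pt (x' + y')"
    using norm[OF assms(1,2,4) x'(2,1)] by blast
  obtain z' where z': "z' \<noteq> 0" "f (V.pt z) = W.pt z'" "f (V.pt (x + z)) = W.pt (x' + z')"
    using norm[OF assms(1,3) fxz x'(2,1)] by blast
  have "z' \<notin> W.lin2 x' y'"
  proof
    assume "z' \<in> W.lin2 x' y'"
    then have "W.pt z' \<in> pjoin sm' {W.pt x'} {W.pt y'}" using W.pt_in_pjoin2 z'(1) by blast
    then show False using assms(5) x' y' z' by simp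
  qed
  then have "W.ind3 x' y' z'" unfolding W.ind3_def using x' y' assms(4) by auto
  then have "plane sm sm' D f x y z x' y' z'"
    by (intro plane.intro wl_axioms plane_axioms.intro) (use assms x' y' z' in auto)
  then show ?thesis by blast
qed

end

lemma surj_line_top:
  fixes sm :: "'v::ab_group_add \<Rightarrow> 'k::division_ring \<Rightarrow> 'v"
    and sm' :: "'w::ab_group_add \<Rightarrow> 'k2::division_ring \<Rightarrow> 'w"
    and D :: "'v set set" and f :: "'v set \<Rightarrow> 'w set"
  assumes W: "wl sm sm' D f"
    and tri: "\<exists>A\<in>f ` D. \<exists>B\<in>f ` D. \<exists>C\<in>f ` D. triangle sm' A B C"
    and mono: "\<forall>g :: 'k \<Rightarrow> 'k2. ring_mono g \<longrightarrow> surj g"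
    and x: "x \<noteq> 0" "rvs.pt sm x \<in> D" and y: "y \<noteq> 0" "rvs.pt sm y \<in> D"
    and fne: "f (rvs.pt sm x) \<noteq> f (rvs.pt sm y)"
    and Q: "Q \<in> pjoin sm' {f (rvs.pt sm x)} {f (rvs.pt sm y)}"
  shows "Q = f (rvs.pt sm x) \<or> (\<exists>a. sm x a + y \<noteq> 0 \<and> rvs.pt sm (sm x a + y) \<in> D \<and>
           Q = f (rvs.pt sm (sm x a + y)))"
proof -
  interpret wl sm sm' D f by (rule W)
  obtain A B C where ABC: "A \<in> f ` D" "B \<in> f ` D" "C \<in> f ` D" "triangle sm' A B C" using tri by blast
  obtain P where P: "P \<in> {A, B, C}" "P \<notin> pjoin sm' {f (V.pt x)} {f (V.pt y)}"
  proof -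
    have "f (V.pt x) \<in> proj_points sm'" "f (V.pt y) \<in> proj_points sm'"
      using pm x y unfolding partial_map_def by auto
    then have "\<not> (A \<in> pjoin sm' {f (V.pt x)} {f (V.pt y)} \<and> B \<in> pjoin sm' {f (V.pt x)} {f (V.pt y)}
        \<and> C \<in> pjoin sm' {f (V.pt x)} {f (V.pt y)})"
      using W.triangle_not_on_line[OF ABC(4)] by blast
    then show ?thesis using that by blast
  qed
  then obtain Z where Z: "Z \<in> D" "P = f Z" using ABC by blast
  obtain z where z: "z \<noteq> 0" "Z = V.pt z" using D_pt Z(1) by blast
  obtain x' y' z' where pl: "plane sm sm' D f x y z x' y' z'"
    using mkplane[of x y z] x y z Z P fne by blast
  interpret P: plane sm sm' D f x y z x' y' z' by (rule pl)
  have "surj P.sig" using mono P.sig_mono by blast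
  then show ?thesis using P.surj_plane[OF _ Q] by blast
qed


theorem corollary3:
  fixes sm :: "'v::ab_group_add \<Rightarrow> 'k::division_ring \<Rightarrow> 'v"
    and sm' :: "'w::ab_group_add \<Rightarrow> 'k2::division_ring \<Rightarrow> 'w"
    and D :: "'v set set" and f :: "'v set \<Rightarrow> 'w set"
  assumes "right_vs sm" and "right_vs sm'"
    and "partial_map sm sm' D f"
    and "weak_linear sm sm' D f"
    and "\<exists>A\<in>f ` D. \<exists>B\<in>f ` D. \<exists>C\<in>f ` D. triangle sm' A B C"
    and "\<forall>g :: 'k \<Rightarrow> 'k2. ring_mono g \<longrightarrow> surj g"
  shows "linear_map sm sm' D f"
proof -
  have W: "wl sm sm' D f" using assms(1-4) by (simp add: wl_def wl_axioms_def rvs_def)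
  interpret wl sm sm' D f by (rule W)
  note SL = surj_line_top[OF W assms(5,6)]
  have L1: "\<forall>X\<in>proj_points sm. \<forall>Y\<in>proj_points sm. X \<noteq> Y \<longrightarrow>
        pimg D f (pjoin sm {X} {Y}) = pjoin sm' (pimg D f {X}) (pimg D f {Y})"
  proof (intro ballI impI)
    fix X Y assume XY: "X \<in> proj_points sm" "Y \<in> proj_points sm" "X \<noteq> Y"
    obtain x where x: "x \<noteq> 0" "X = V.pt x" using XY(1) V.proj_points_iff by blast
    obtain y where y: "y \<noteq> 0" "Y = V.pt y" using XY(2) V.proj_points_iff by blast
    have xin: "X \<in> pjoin sm {X} {Y}" using V.pt_in_pjoin2[OF x(1) V.lin2_u[of x y]] x y by simp
    have yin: "Y \<in> pjoin sm {X} {Y}" using V.pt_in_pjoin2[OF y(1) V.lin2_w[of y x]] x y by simp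
    have sub: "pimg D f (pjoin sm {X} {Y}) \<subseteq> pjoin sm' (pimg D f {X}) (pimg D f {Y})"
      using wlin XY unfolding weak_linear_def by blast
    have sup: "pjoin sm' (pimg D f {X}) (pimg D f {Y}) \<subseteq> pimg D f (pjoin sm {X} {Y})"
    proof (cases "X \<in> D")
      case XD: True
      obtain r where r: "r \<noteq> 0" "f X = W.pt r" using img_pt XD x by blast
      have fX: "f X \<in> pimg D f (pjoin sm {X} {Y})" using xin XD unfolding pimg_def by blast
      show ?thesis
      proof (cases "Y \<in> D")
        case YD: True
        show ?thesis
        proof (cases "f X = f Y")
          case True
          then show ?thesis using XD YD fX r W.pjoin_same[OF r(1)] by (simp add: pimg1)
        next
          case False
          show ?thesis
          proof
            fix Q assume "Q \<in> pjoin sm' (pimg D f {X}) (pimg D f {Y})"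
            then have Q: "Q \<in> pjoin sm' {f (V.pt x)} {f (V.pt y)}" using XD YD x y by (simp add: pimg1)
            from SL[OF x(1) _ y(1) _ _ Q] XD YD x y False
            have "Q = f (V.pt x) \<or> (\<exists>a. sm x a + y \<noteq> 0 \<and> V.pt (sm x a + y) \<in> D \<and> Q = f (V.pt (sm x a + y)))"
              by simp
            then show "Q \<in> pimg D f (pjoin sm {X} {Y})"
            proof
              assume "Q = f (V.pt x)" then show ?thesis using fX x by simp
            next
              assume "\<exists>a. sm x a + y \<noteq> 0 \<and> V.pt (sm x a + y) \<in> D \<and> Q = f (V.pt (sm x a + y))"
              then obtain a where a: "sm x a + y \<noteq> 0" "V.pt (sm x a + y) \<in> D" "Q = f (V.pt (sm x a + y))"
                by blast
              have "sm x a + y \<in> V.lin2 x y" using V.lin2_mem[of x a y 1] by simp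
              then have "V.pt (sm x a + y) \<in> pjoin sm {X} {Y}" using V.pt_in_pjoin2 a(1) x y by blast
              then show ?thesis using a unfolding pimg_def by blast
            qed
          qed
        qed
      next
        case False
        then show ?thesis using XD fX r W.pjoin1[OF r(1)] by (simp add: pimg1)
      qed
    next
      case XD: False
      show ?thesis
      proof (cases "Y \<in> D")
        case YD: True
        obtain r where r: "r \<noteq> 0" "f Y = W.pt r" using img_pt YD y by blast
        have fY: "f Y \<in> pimg D f (pjoin sm {X} {Y})" using yin YD unfolding pimg_def by blast
        then show ?thesis using XD YD r W.pjoin1'[OF r(1)] by (simp add: pimg1)
      next
        case False
        then show ?thesis using XD W.pjoin0 by (simp add: pimg1)
      qed
    qed
    show "pimg D f (pjoin sm {X} {Y}) = pjoin sm' (pimg D f {X}) (pimg D f {Y})"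
      using sub sup by blast
  qed
  have L2: "\<forall>X\<in>D. \<forall>Y\<in>D. X \<noteq> Y \<and> f X = f Y \<longrightarrow> (\<exists>Z\<in>pjoin sm {X} {Y}. Z \<in> proj_points sm - D)"
  proof (intro ballI impI)
    fix X Y assume XD: "X \<in> D" and YD: "Y \<in> D" and XY: "X \<noteq> Y \<and> f X = f Y"
    obtain x where x: "x \<noteq> 0" "X = V.pt x" using D_pt XD by blast
    obtain y where y: "y \<noteq> 0" "Y = V.pt y" using D_pt YD by blast
    show "\<exists>Z\<in>pjoin sm {X} {Y}. Z \<in> proj_points sm - D"
    proof (rule ccontr)
      assume H: "\<not> (\<exists>Z\<in>pjoin sm {X} {Y}. Z \<in> proj_points sm - D)"
      have inD: "p \<noteq> 0 \<Longrightarrow> p \<in> V.lin2 x y \<Longrightarrow> V.pt p \<in> D" for p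
        using H V.pt_in_pjoin2[of p x y] V.pt_in_pp[of p] x y by blast
      obtain z where z: "z \<noteq> 0" "V.pt z \<in> D" "f (V.pt z) \<noteq> f (V.pt x)"
      proof -
        obtain A B C where ABC: "A \<in> f ` D" "B \<in> f ` D" "triangle sm' A B C" using assms(5) by blast
        have "A \<noteq> B" using ABC(3) unfolding triangle_def by blast
        then obtain Z where Z: "Z \<in> D" "f Z \<noteq> f X" using ABC(1,2) by blast
        obtain z where "z \<noteq> 0" "Z = V.pt z" using D_pt Z(1) by blast
        then show ?thesis using that Z x by blast
      qed
      have nxy: "V.pt x \<noteq> V.pt y" using XY x y by simp
      have fxy: "f (V.pt x) = f (V.pt y)" using XY x y by simp
      have dx: "dm x" and dy: "dm y" using x y XD YD by auto
      have fyz: "f (V.pt y) \<noteq> f (V.pt z)" using z fxy by simp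
      have ld: "dm (y + z) \<and> f (V.pt (y + z)) \<noteq> f (V.pt y)"
        using line_dom[OF dy _ fyz, of 1 1 "y + z"] z by simp
      have "y + z \<in> V.lin2 y z" using V.lin2_mem[of y 1 z 1] by simp
      moreover have nyz: "V.pt y \<noteq> V.pt z" using fyz by auto
      ultimately have "f (V.pt (y + z)) \<in> pjoin sm' (pimg D f {V.pt y}) (pimg D f {V.pt z})"
        using wlA[OF y(1) z(1)] ld by blast
      then have "f (V.pt (y + z)) \<in> pjoin sm' {f (V.pt y)} {f (V.pt z)}"
        using YD y z by (simp add: pimg1)
      then have "f (V.pt (y + z)) \<in> pjoin sm' {f (V.pt x)} {f (V.pt z)}"
        using fxy by simp
      from SL[OF x(1) _ z(1,2) _ this] XD x z
      have "f (V.pt (y + z)) = f (V.pt x) \<or>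
          (\<exists>a. sm x a + z \<noteq> 0 \<and> V.pt (sm x a + z) \<in> D \<and> f (V.pt (y + z)) = f (V.pt (sm x a + z)))"
        by auto
      then obtain a where a: "sm x a + z \<noteq> 0" "V.pt (sm x a + z) \<in> D"
          "f (V.pt (y + z)) = f (V.pt (sm x a + z))"
        using ld fxy by auto
      have zn: "z \<notin> V.lin2 x y"
      proof
        assume "z \<in> V.lin2 x y"
        then have "f (V.pt z) = f (V.pt x)" using wl1[OF dx dy nxy fxy] inD z by blast
        then show False using z by simp
      qed
      have ind: "V.ind3 x y z" unfolding V.ind3_def using x y nxy zn by blast
      have npt: "V.pt (y + z) \<noteq> V.pt (sm x a + z)"
      proof
        assume "V.pt (y + z) = V.pt (sm x a + z)"
        then obtain k where k: "sm x a + z = sm (y + z) k" using V.pt_eq_iff ld by metis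
        then have "sm x a + sm y 0 + sm z 1 = sm x 0 + sm y k + sm z k" by simp
        from V.comb3_inj[OF ind this] show False by (metis zero_neq_one)
      qed
      define p where "p = sm x (-a) + sm y 1"
      have pnz: "p \<noteq> 0" unfolding p_def using V.indep2[OF x(1) y(1) nxy, of "-a" 1] by auto
      have pl: "p \<in> V.lin2 x y" unfolding p_def by (rule V.lin2_mem)
      have dp: "dm p" using inD[OF pnz pl] pnz by simp
      have "p = sm (y + z) 1 + sm (sm x a + z) (-1)" unfolding p_def by (simp add: algebra_simps)
      then have "p \<in> V.lin2 (y + z) (sm x a + z)" by (metis V.lin2_mem)
      then have e1: "f (V.pt p) = f (V.pt (y + z))" using wl1[OF _ _ npt a(3)] ld a(1,2) dp by blast
      have e2: "f (V.pt p) = f (V.pt x)" using wl1[OF dx dy nxy fxy pl dp] .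
      show False using e1 e2 ld fxy by simp
    qed
  qed
  show ?thesis unfolding linear_map_def using L1 L2 by blast
qed


end
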